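(* Fix $\mu \in \mathcal{X}$ and let $P_X$ be a probability distribution on $\mathcal{X}$ with $P_X(\{ \mu \}) = 0$. Let $(\mu_n)$ be a sequence in $\mathcal{X}$ with $d(\mu_n, \mu) \to 0$. Then $D(\mu_n; P_X) \to D(\mu; P_X)$ as $n \to \infty$.
   Context: $(\mathcal{X}, d)$ is a complete separable metric space with its Borel $\sigma$-algebra. Define $h: \mathcal{X}^3 \to \mathbb{R}$ by $h(x_1, x_2, x_3) := \mathbb{I}( x_3 \notin \{x_1, x_2\} ) \dfrac{ d^2(x_1, x_3) + d^2(x_2, x_3) - d^2(x_1, x_2) }{d(x_1, x_3)\, d(x_2, x_3) }$, where $h := 0$ when $x_3 \in \{x_1,x_2\}$. The metric spatial depth of $\mu \in \mathcal{X}$ with respect to a probability distribution $P_X$ on $\mathcal{X}$ is $D(\mu; P_X) := 1 - \frac{1}{2} \mathrm{E} \{ h(X_1, X_2, \mu) \}$, where $X_1, X_2 \sim P_X$ are independent. *)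

theory Defs
  imports "HOL-Probability.Probability"
begin

definition msd_h :: "'a::metric_space \<Rightarrow> 'a \<Rightarrow> 'a \<Rightarrow> real" where
  "msd_h x1 x2 x3 =
     (if x3 \<in> {x1, x2} then 0
      else (dist x1 x3 ^ 2 + dist x2 x3 ^ 2 - dist x1 x2 ^ 2) / (dist x1 x3 * dist x2 x3))"

definition msd_depth :: "'a::metric_space measure \<Rightarrow> 'a \<Rightarrow> real" where
  "msd_depth P \<mu> = 1 - (1/2) * (\<integral>z. msd_h (fst z) (snd z) \<mu> \<partial>(P \<Otimes>\<^sub>M P))"

end

theory Submission
  imports Defs
begin

lemma msd_h_bound: "\<bar>msd_h x1 x2 (x3::'a::metric_space)\<bar> \<le> 2"
proof (cases "x3 \<in> {x1, x2}")
  case True thus ?thesis by (simp add: msd_h_def)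
next
  case False
  define a where "a = dist x1 x3"
  define b where "b = dist x2 x3"
  define c where "c = dist x1 x2"
  have a: "a > 0" using False by (auto simp: a_def)
  have b: "b > 0" using False by (auto simp: b_def)
  have c0: "c \<ge> 0" by (simp add: c_def)
  have t1: "c \<le> a + b" unfolding a_def b_def c_def by (metis dist_commute dist_triangle)
  have t2: "a \<le> c + b" unfolding a_def b_def c_def by (metis dist_commute dist_triangle)
  have t3: "b \<le> c + a" unfolding a_def b_def c_def by (metis dist_commute dist_triangle)
  have u: "c^2 \<le> (a+b)^2" using t1 c0 by (simp add: power_mono)
  have l: "(a-b)^2 \<le> c^2"
  proof -
    have "\<bar>a-b\<bar> \<le> c" using t2 t3 by auto
    thus ?thesis using c0 by (metis abs_le_square_iff abs_of_nonneg)
  qed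
  have "\<bar>a^2+b^2-c^2\<bar> \<le> 2*(a*b)" using u l by (auto simp: power2_eq_square algebra_simps abs_le_iff)
  hence "\<bar>(a^2+b^2-c^2)/(a*b)\<bar> \<le> 2" using a b by (simp add: abs_divide divide_le_eq abs_mult)
  thus ?thesis using False by (simp add: msd_h_def a_def b_def c_def)
qed

lemma msd_h_meas:
  assumes "sets P = sets (borel::'a::polish_space measure)"
  shows "(\<lambda>z. msd_h (fst z) (snd z) m) \<in> borel_measurable (P \<Otimes>\<^sub>M P)"
proof -
  have e: "measurable (P \<Otimes>\<^sub>M P) = measurable (borel :: ('a \<times> 'a) measure)"
    by (intro ext measurable_cong_sets) (auto simp: assms sets_pair_measure_cong[of P borel P borel] borel_prod[symmetric])
  have "(\<lambda>z::'a\<times>'a. msd_h (fst z) (snd z) m) \<in> borel_measurable borel"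
  proof -
    have c1: "continuous_on UNIV (\<lambda>z::'a\<times>'a. dist (fst z) m)"
      by (intro continuous_intros)
    have c2: "continuous_on UNIV (\<lambda>z::'a\<times>'a. dist (snd z) m)"
      by (intro continuous_intros)
    have c3: "continuous_on UNIV (\<lambda>z::'a\<times>'a. dist (fst z) (snd z))"
      by (intro continuous_intros)
    have g: "(\<lambda>z::'a\<times>'a. (dist (fst z) m ^ 2 + dist (snd z) m ^ 2 - dist (fst z) (snd z) ^ 2) /
       (dist (fst z) m * dist (snd z) m)) \<in> borel_measurable borel"
      using borel_measurable_continuous_onI[OF c1] borel_measurable_continuous_onI[OF c2]
        borel_measurable_continuous_onI[OF c3] by measurable
    have cl: "closed {z::'a\<times>'a. m = fst z \<or> m = snd z}"
      by (intro closed_Collect_disj closed_Collect_eq continuous_intros)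
    have S: "{z::'a\<times>'a. m = fst z \<or> m = snd z} \<in> sets borel" using cl by (rule borel_closed)
    have "(\<lambda>z::'a\<times>'a. if z \<in> {z. m = fst z \<or> m = snd z} then 0 else
       (dist (fst z) m ^ 2 + dist (snd z) m ^ 2 - dist (fst z) (snd z) ^ 2) /
       (dist (fst z) m * dist (snd z) m)) \<in> borel_measurable borel"
      using S g by (intro measurable_If_set) auto
    thus ?thesis unfolding msd_h_def by (simp add: dist_commute)
  qed
  thus ?thesis by (subst fun_cong[OF e, of borel])
qed


lemma msd_h_tendsto:
  fixes x1 x2 m :: "'a::metric_space"
  assumes "x1 \<noteq> m" "x2 \<noteq> m" "ms \<longlonglongrightarrow> m"
  shows "(\<lambda>n. msd_h x1 x2 (ms n)) \<longlonglongrightarrow> msd_h x1 x2 m"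
proof -
  define g where "g = (\<lambda>y. (dist x1 y ^ 2 + dist x2 y ^ 2 - dist x1 x2 ^ 2) / (dist x1 y * dist x2 y))"
  have ev1: "eventually (\<lambda>n. ms n \<noteq> x1) sequentially"
    using assms(3) assms(1) by (simp add: tendsto_imp_eventually_ne)
  have ev2: "eventually (\<lambda>n. ms n \<noteq> x2) sequentially"
    using assms(3) assms(2) by (simp add: tendsto_imp_eventually_ne)
  have ev: "eventually (\<lambda>n. g (ms n) = msd_h x1 x2 (ms n)) sequentially"
    using eventually_conj[OF ev1 ev2] by eventually_elim (auto simp: g_def msd_h_def)
  have "(\<lambda>n. g (ms n)) \<longlonglongrightarrow> g m"
    unfolding g_def using assms by (intro tendsto_intros) auto
  moreover have "g m = msd_h x1 x2 m" using assms by (auto simp: g_def msd_h_def)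
  ultimately show ?thesis using ev by (metis (mono_tags) tendsto_cong)
qed

theorem theorem6:
  fixes P :: "'a::polish_space measure" and \<mu> :: 'a and \<mu>s :: "nat \<Rightarrow> 'a"
  assumes "prob_space P"
    and "sets P = sets borel"
    and "measure P {\<mu>} = 0"
    and "(\<lambda>n. dist (\<mu>s n) \<mu>) \<longlonglongrightarrow> 0"
  shows "(\<lambda>n. msd_depth P (\<mu>s n)) \<longlonglongrightarrow> msd_depth P \<mu>"
proof -
  interpret P: prob_space P by fact
  interpret PP: pair_prob_space P P by unfold_locales
  have conv: "\<mu>s \<longlonglongrightarrow> \<mu>" using assms(4) tendsto_dist_iff by blast
  have sing: "{\<mu>} \<in> sets P" unfolding assms(2) by (rule borel_closed) simp
  have nul: "AE y in P. y \<noteq> \<mu>"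
    using sing assms(3) by (intro AE_I'[of "{\<mu>}"]) (auto simp: P.emeasure_eq_measure null_sets_def)
  have Sset: "{z \<in> space (P \<Otimes>\<^sub>M P). fst z \<noteq> \<mu> \<and> snd z \<noteq> \<mu>} \<in> sets (P \<Otimes>\<^sub>M P)"
  proof -
    have "{z \<in> space (P \<Otimes>\<^sub>M P). fst z \<noteq> \<mu> \<and> snd z \<noteq> \<mu>} = (space P - {\<mu>}) \<times> (space P - {\<mu>})"
      by (auto simp: space_pair_measure)
    thus ?thesis using sing by simp
  qed
  have AEne: "AE z in P \<Otimes>\<^sub>M P. fst z \<noteq> \<mu> \<and> snd z \<noteq> \<mu>"
  proof (rule PP.AE_pair_measure[OF Sset])
    have "AE x in P. AE y in P. x \<noteq> \<mu> \<and> y \<noteq> \<mu>"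
      using nul
    proof eventually_elim
      case (elim x)
      show ?case using nul by eventually_elim (use elim in simp)
    qed
    thus "AE x in P. AE y in P. fst (x, y) \<noteq> \<mu> \<and> snd (x, y) \<noteq> \<mu>" by simp
  qed
  have lim: "(\<lambda>n. \<integral>z. msd_h (fst z) (snd z) (\<mu>s n) \<partial>(P \<Otimes>\<^sub>M P))
      \<longlonglongrightarrow> (\<integral>z. msd_h (fst z) (snd z) \<mu> \<partial>(P \<Otimes>\<^sub>M P))"
  proof (rule integral_dominated_convergence[where w="\<lambda>_. 2"])
    show "(\<lambda>z. msd_h (fst z) (snd z) \<mu>) \<in> borel_measurable (P \<Otimes>\<^sub>M P)"
      using msd_h_meas[OF assms(2)] .
    show "(\<lambda>z. msd_h (fst z) (snd z) (\<mu>s n)) \<in> borel_measurable (P \<Otimes>\<^sub>M P)" for n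
      using msd_h_meas[OF assms(2)] .
    show "integrable (P \<Otimes>\<^sub>M P) (\<lambda>_. 2::real)" by simp
    show "AE z in P \<Otimes>\<^sub>M P. (\<lambda>n. msd_h (fst z) (snd z) (\<mu>s n)) \<longlonglongrightarrow> msd_h (fst z) (snd z) \<mu>"
      using AEne
    proof eventually_elim
      case (elim z)
      show ?case using elim by (intro msd_h_tendsto conv) simp_all
    qed
    show "AE z in P \<Otimes>\<^sub>M P. norm (msd_h (fst z) (snd z) (\<mu>s n)) \<le> 2" for n
      by (intro AE_I2) (simp add: msd_h_bound)
  qed
  show ?thesis unfolding msd_depth_def by (intro tendsto_intros lim)
qed

end
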